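(* Let $f$ be a smooth function on an open planar set whose graph is an indefinite improper affine sphere with affine normal $(0,0,1)$ (equivalently $\det D^2f=-1$) and strictly positive Pick invariant. Let $p(u,v)$ be a planar parameterization by asymptotic parameters, i.e. $D^2f(p_u,p_u)=D^2f(p_v,p_v)=0$, oriented so that $D^2f(p_u,p_v)=[p_u,p_v]$. Then: (1) $D^2f\,p_u=R\,p_u$ and $D^2f\,p_v=-R\,p_v$; (2) setting $\pi_1(p)=p+R\nabla f(p)$ and $\pi_2(p)=p-R\nabla f(p)$, the map $\pi_1\circ p$ is constant along each asymptotic line $v=v_0$ and $\pi_2\circ p$ is constant along each asymptotic line $u=u_0$.
   Context: $[X,Y]$ denotes the determinant of the $2\times 2$ matrix with columns $X,Y$; $R$ is the counterclockwise rotation by ninety degrees; $D^2f$ is the Hessian of $f$, used both as a bilinear form and as a matrix. Asymptotic parameters of the graph surface $q(u,v)=(p(u,v),f(p(u,v)))$ are parameters with $[q_u,q_v,q_{uu}]=[q_u,q_v,q_{vv}]=0$, which amounts to $D^2f(p_u,p_u)=D^2f(p_v,p_v)=0$. *)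

theory Defs
  imports "HOL-Analysis.Analysis"
begin

text \<open>Points of the plane are elements of real^2; coordinate 1 is the first
  (u resp. x) coordinate and coordinate 2 the second.\<close>

definition partial :: "2 \<Rightarrow> (real^2 \<Rightarrow> real) \<Rightarrow> real^2 \<Rightarrow> real" where
  "partial i g x = frechet_derivative g (at x) (axis i 1)"

fun iter_partial :: "2 list \<Rightarrow> (real^2 \<Rightarrow> real) \<Rightarrow> real^2 \<Rightarrow> real" where
  "iter_partial [] g = g"
| "iter_partial (i # is) g = partial i (iter_partial is g)"

definition smooth_on :: "(real^2) set \<Rightarrow> (real^2 \<Rightarrow> real) \<Rightarrow> bool" where
  "smooth_on U g \<longleftrightarrow> (\<forall>is. iter_partial is g differentiable_on U)"

definition vsmooth_on :: "(real^2) set \<Rightarrow> (real^2 \<Rightarrow> real^2) \<Rightarrow> bool" where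
  "vsmooth_on U p \<longleftrightarrow> (\<forall>k. smooth_on U (\<lambda>x. p x $ k))"

definition vpartial :: "2 \<Rightarrow> (real^2 \<Rightarrow> real^2) \<Rightarrow> real^2 \<Rightarrow> real^2" where
  "vpartial i p x = frechet_derivative p (at x) (axis i 1)"

definition gradient2 :: "(real^2 \<Rightarrow> real) \<Rightarrow> real^2 \<Rightarrow> real^2" where
  "gradient2 f x = (\<chi> i. partial i f x)"

definition hessian :: "(real^2 \<Rightarrow> real) \<Rightarrow> real^2 \<Rightarrow> real^2^2" where
  "hessian f x = (\<chi> i j. iter_partial [i, j] f x)"

definition hess_form :: "(real^2 \<Rightarrow> real) \<Rightarrow> real^2 \<Rightarrow> real^2 \<Rightarrow> real^2 \<Rightarrow> real" where
  "hess_form f x X Y = X \<bullet> (hessian f x *v Y)"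

definition rot :: "real^2 \<Rightarrow> real^2" where
  "rot X = vector [- (X $ 2), X $ 1]"

definition bracket :: "real^2 \<Rightarrow> real^2 \<Rightarrow> real" where
  "bracket X Y = det (\<chi> i j. if j = 1 then X $ i else Y $ i :: real^2^2)"

text \<open>Pick invariant of the graph of f when det D^2 f = -1 (affine normal (0,0,1)):
  the Blaschke metric is h = D^2 f and the cubic form is C = D^3 f, and
  J = 1/(n(n-1)) h^{il} h^{jm} h^{kn} C_{ijk} C_{lmn} with n = 2.\<close>
definition pick_invariant :: "(real^2 \<Rightarrow> real) \<Rightarrow> real^2 \<Rightarrow> real" where
  "pick_invariant f x =
     (let Hi = matrix_inv (hessian f x) in
      (1/2) * (\<Sum>i\<in>UNIV. \<Sum>j\<in>UNIV. \<Sum>k\<in>UNIV. \<Sum>l\<in>UNIV. \<Sum>m\<in>UNIV. \<Sum>n\<in>UNIV.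
        Hi $ i $ l * Hi $ j $ m * Hi $ k $ n *
        iter_partial [i, j, k] f x * iter_partial [l, m, n] f x))"

definition pi1 :: "(real^2 \<Rightarrow> real) \<Rightarrow> real^2 \<Rightarrow> real^2" where
  "pi1 f y = y + rot (gradient2 f y)"

definition pi2 :: "(real^2 \<Rightarrow> real) \<Rightarrow> real^2 \<Rightarrow> real^2" where
  "pi2 f y = y - rot (gradient2 f y)"

end

theory Submission
  imports Defs
begin

lemma alg:
  fixes h11 h12 h21 h22 a1 a2 b1 b2 d :: real
  assumes det: "h11*h22 - h12*h21 = -1"
  and aa: "a1*(h11*a1+h12*a2) + a2*(h21*a1+h22*a2) = 0"
  and bb: "b1*(h11*b1+h12*b2) + b2*(h21*b1+h22*b2) = 0"
  and ab: "a1*(h11*b1+h12*b2) + a2*(h21*b1+h22*b2) = d"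
  and dd: "d = a1*b2 - b1*a2" and dnz: "d \<noteq> 0"
  shows "h11*a1+h12*a2 = -a2 \<and> h21*a1+h22*a2 = a1 \<and> h11*b1+h12*b2 = b2 \<and> h21*b1+h22*b2 = -b1
    \<and> h11*a1+h21*a2 = -a2 \<and> h12*a1+h22*a2 = a1 \<and> h11*b1+h21*b2 = b2 \<and> h12*b1+h22*b2 = -b1"
proof -
  define c where "c = b1*(h11*a1+h12*a2) + b2*(h21*a1+h22*a2)"
  have id: "(a1*(h11*a1+h12*a2) + a2*(h21*a1+h22*a2))*(b1*(h11*b1+h12*b2) + b2*(h21*b1+h22*b2))
     - (a1*(h11*b1+h12*b2) + a2*(h21*b1+h22*b2)) * c = (a1*b2 - b1*a2)^2 * (h11*h22 - h12*h21)"
    unfolding c_def by algebra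
  have "0 * (b1*(h11*b1+h12*b2) + b2*(h21*b1+h22*b2)) - d * c = d^2 * (-1)"
    using id unfolding aa ab det dd .
  then have "- d * c = - (d*d)" by (simp add: power2_eq_square)
  then have cd: "c = d" using dnz by simp
  \<comment> \<open>x = Ha - Ra; a.x = 0, b.x = 0\<close>
  have lin: "x1 = 0 \<and> x2 = 0" if "a1*x1 + a2*x2 = 0" "b1*x1+b2*x2 = 0" for x1 x2 :: real
  proof -
    have "d*x1 = 0" "d*x2 = 0" using that unfolding dd by algebra+
    then show ?thesis using dnz by simp
  qed
  have 1: "h11*a1+h12*a2 + a2 = 0 \<and> h21*a1+h22*a2 - a1 = 0"
    by (rule lin) (use aa cd c_def dd in algebra)+
  have 2: "h11*b1+h12*b2 - b2 = 0 \<and> h21*b1+h22*b2 + b1 = 0"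
    by (rule lin) (use bb ab dd in algebra)+
  have 3: "h11*a1+h21*a2 + a2 = 0 \<and> h12*a1+h22*a2 - a1 = 0"
    by (rule lin) (use aa ab dd in algebra)+
  have 4: "h11*b1+h21*b2 - b2 = 0 \<and> h12*b1+h22*b2 + b1 = 0"
    by (rule lin) (use bb cd c_def dd in algebra)+
  show ?thesis using 1 2 3 4 by linarith
qed

lemma vec2_eq: "(x::'a^2) = y \<longleftrightarrow> x$1 = y$1 \<and> x$2 = y$2"
  by (simp add: vec_eq_iff forall_2)

lemma linear_rot: "linear rot"
  by (rule linearI) (simp_all add: rot_def vec2_eq)

lemma bl_rot: "bounded_linear rot"
  using linear_rot linear_conv_bounded_linear by blast

lemma rot_rot: "rot (rot x) = - x"
  by (simp add: rot_def vec2_eq)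

lemma vec_decomp2: "(y::real^2) = y$1 *\<^sub>R axis 1 1 + y$2 *\<^sub>R axis 2 1"
  by (simp add: vec2_eq axis_def)

lemma lin_dir:
  assumes "(g has_derivative g') (at x)"
  shows "g' y = y$1 * partial 1 g x + y$2 * partial 2 g x"
proof -
  have fd: "frechet_derivative g (at x) = g'" using assms frechet_derivative_at by metis
  have "linear g'" using assms has_derivative_linear by blast
  then have "g' y = y$1 * g' (axis 1 1) + y$2 * g' (axis 2 1)"
    by (subst vec_decomp2) (simp add: linear_add linear_scale)
  then show ?thesis by (simp add: partial_def fd)
qed

lemma vec_has_derivative_iff:
  "((h::'a::real_normed_vector \<Rightarrow> real^'n) has_derivative h') (at a within S) \<longleftrightarrow>
   (\<forall>i. ((\<lambda>x. h x $ i) has_derivative (\<lambda>x. h' x $ i)) (at a within S))"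
  by (subst has_derivative_componentwise_within) (auto simp: Basis_vec_def cart_eq_inner_axis)

lemma smooth_diff:
  assumes "open U" "smooth_on U g" "x \<in> U"
  shows "iter_partial is g differentiable at x"
  using assms unfolding smooth_on_def by (meson differentiable_on_eq_differentiable_at)

lemma grad_deriv:
  assumes "open U" "smooth_on U f" "x \<in> U"
  shows "(gradient2 f has_derivative (\<lambda>y. transpose (hessian f x) *v y)) (at x)"
proof -
  have "((\<lambda>x. gradient2 f x $ i) has_derivative (\<lambda>y. (transpose (hessian f x) *v y) $ i)) (at x)" for i
  proof -
    have "iter_partial [i] f differentiable at x" using smooth_diff[OF assms] .
    then have d: "(partial i f has_derivative frechet_derivative (partial i f) (at x)) (at x)"
      by (simp add: frechet_derivative_works)
    have e: "frechet_derivative (partial i f) (at x) y = (transpose (hessian f x) *v y) $ i" for y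
      using lin_dir[OF d, of y]
      by (simp add: matrix_vector_mult_def transpose_def hessian_def sum_2 mult.commute)
    show ?thesis using d unfolding gradient2_def e[symmetric] by simp
  qed
  then show ?thesis by (subst vec_has_derivative_iff) simp
qed

lemma p_deriv:
  assumes "open W" "vsmooth_on W p" "w \<in> W"
  shows "(p has_derivative frechet_derivative p (at w)) (at w)"
proof -
  have "(\<lambda>x. p x $ k) differentiable at w" for k
    using smooth_diff[OF assms(1) _ assms(3), of "\<lambda>x. p x $ k" "[]"] assms(2)
    unfolding vsmooth_on_def by simp
  then have "p differentiable at w"
    by (subst differentiable_componentwise_within) (auto simp: Basis_vec_def cart_eq_inner_axis)
  then show ?thesis by (simp add: frechet_derivative_works)
qed


lemma pointwise:
  fixes H :: "real^2^2" and a b :: "real^2"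
  assumes "det H = -1" "a \<bullet> (H *v a) = 0" "b \<bullet> (H *v b) = 0"
    "a \<bullet> (H *v b) = bracket a b" "bracket a b \<noteq> 0"
  shows "H *v a = rot a \<and> H *v b = - rot b \<and> transpose H *v a = rot a \<and> transpose H *v b = - rot b"
proof -
  have br: "bracket a b = a$1*b$2 - b$1*a$2" by (simp add: bracket_def det_2)
  have A: "H$1$1*H$2$2 - H$1$2*H$2$1 = -1" using assms(1) by (simp add: det_2)
  have B: "a$1*(H$1$1*a$1+H$1$2*a$2) + a$2*(H$2$1*a$1+H$2$2*a$2) = 0"
    using assms(2) by (simp add: inner_vec_def matrix_vector_mult_def sum_2)
  have C: "b$1*(H$1$1*b$1+H$1$2*b$2) + b$2*(H$2$1*b$1+H$2$2*b$2) = 0"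
    using assms(3) by (simp add: inner_vec_def matrix_vector_mult_def sum_2)
  have D: "a$1*(H$1$1*b$1+H$1$2*b$2) + a$2*(H$2$1*b$1+H$2$2*b$2) = bracket a b"
    using assms(4) by (simp add: inner_vec_def matrix_vector_mult_def sum_2)
  note r = alg[OF A B C D br assms(5)]
  show ?thesis using r
    by (simp add: vec2_eq matrix_vector_mult_def sum_2 transpose_def rot_def)
qed

lemma seg_const:
  fixes G :: "real^2 \<Rightarrow> real^2"
  assumes "\<And>w. w \<in> closed_segment A B \<Longrightarrow> \<exists>G'. (G has_derivative G') (at w) \<and> G' (B - A) = 0"
  shows "G A = G B"
proof -
  define z where "z s = A + s *\<^sub>R (B - A)" for s :: real
  have zin: "z s \<in> closed_segment A B" if "s \<in> {0..1}" for s
    using that unfolding closed_segment_def z_def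
    by (auto intro!: exI[of _ s] simp: algebra_simps)
  have "((G \<circ> z) has_derivative (\<lambda>h. 0)) (at s within {0..1})" if s: "s \<in> {0..1}" for s
  proof -
    obtain G' where G': "(G has_derivative G') (at (z s))" "G' (B - A) = 0"
      using assms zin[OF s] by blast
    have zd: "(z has_derivative (\<lambda>h. h *\<^sub>R (B - A))) (at s within {0..1})"
      unfolding z_def by (auto intro!: derivative_eq_intros)
    have "((G \<circ> z) has_derivative (G' \<circ> (\<lambda>h. h *\<^sub>R (B - A)))) (at s within {0..1})"
      by (rule diff_chain_within[OF zd has_derivative_at_withinI[OF G'(1)]])
    moreover have "G' \<circ> (\<lambda>h. h *\<^sub>R (B - A)) = (\<lambda>h. 0)"
    proof
      fix h
      have "linear G'" using G'(1) has_derivative_linear by blast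
      then show "(G' \<circ> (\<lambda>h. h *\<^sub>R (B - A))) h = 0"
        using G'(2) by (simp add: linear_scale)
    qed
    ultimately show ?thesis by simp
  qed
  note zz = this
  have "(G \<circ> z) 0 = (G \<circ> z) 1"
    by (rule has_derivative_zero_unique[of "{0..1}" "G \<circ> z"]) (auto intro: zz)
  then show ?thesis by (simp add: z_def)
qed

theorem mainTheorem4:
  fixes f :: "real^2 \<Rightarrow> real" and U :: "(real^2) set"
    and p :: "real^2 \<Rightarrow> real^2" and W :: "(real^2) set"
  assumes U_open: "open U"
    and f_smooth: "smooth_on U f"
    and affine_sphere: "\<forall>x\<in>U. det (hessian f x) = -1"
    and pick_pos: "\<forall>x\<in>U. pick_invariant f x > 0"
    and W_open: "open W"
    and p_smooth: "vsmooth_on W p"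
    and p_into: "p ` W \<subseteq> U"
    and p_regular: "\<forall>w\<in>W. bracket (vpartial 1 p w) (vpartial 2 p w) \<noteq> 0"
    and asym_u: "\<forall>w\<in>W. hess_form f (p w) (vpartial 1 p w) (vpartial 1 p w) = 0"
    and asym_v: "\<forall>w\<in>W. hess_form f (p w) (vpartial 2 p w) (vpartial 2 p w) = 0"
    and orient: "\<forall>w\<in>W. hess_form f (p w) (vpartial 1 p w) (vpartial 2 p w)
                        = bracket (vpartial 1 p w) (vpartial 2 p w)"
  shows "(\<forall>w\<in>W. hessian f (p w) *v vpartial 1 p w = rot (vpartial 1 p w)
               \<and> hessian f (p w) *v vpartial 2 p w = - rot (vpartial 2 p w))
       \<and> (\<forall>u1 u2 v0. closed_segment (vector [u1, v0]) (vector [u2, v0]) \<subseteq> W \<longrightarrow>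
            pi1 f (p (vector [u1, v0])) = pi1 f (p (vector [u2, v0])))
       \<and> (\<forall>u0 v1 v2. closed_segment (vector [u0, v1]) (vector [u0, v2]) \<subseteq> W \<longrightarrow>
            pi2 f (p (vector [u0, v1])) = pi2 f (p (vector [u0, v2])))"
proof -
  have pw: "hessian f (p w) *v vpartial 1 p w = rot (vpartial 1 p w)
      \<and> hessian f (p w) *v vpartial 2 p w = - rot (vpartial 2 p w)
      \<and> transpose (hessian f (p w)) *v vpartial 1 p w = rot (vpartial 1 p w)
      \<and> transpose (hessian f (p w)) *v vpartial 2 p w = - rot (vpartial 2 p w)" if w: "w \<in> W" for w
    apply (rule pointwise)
    using w p_into affine_sphere asym_u asym_v orient p_regular by (auto simp: hess_form_def)
  have G1: "((\<lambda>y. pi1 f (p y)) has_derivative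
      (\<lambda>h. frechet_derivative p (at w) h + rot (transpose (hessian f (p w)) *v frechet_derivative p (at w) h))) (at w)"
    if w: "w \<in> W" for w
  proof -
    have pd: "(p has_derivative frechet_derivative p (at w)) (at w)" by (rule p_deriv[OF W_open p_smooth w])
    have gd: "(gradient2 f has_derivative (\<lambda>y. transpose (hessian f (p w)) *v y)) (at (p w))"
      by (rule grad_deriv[OF U_open f_smooth]) (use w p_into in auto)
    have "((gradient2 f \<circ> p) has_derivative ((\<lambda>y. transpose (hessian f (p w)) *v y) \<circ> frechet_derivative p (at w))) (at w)"
      by (rule diff_chain_at[OF pd gd])
    then have "((\<lambda>y. rot (gradient2 f (p y))) has_derivative (\<lambda>h. rot (transpose (hessian f (p w)) *v frechet_derivative p (at w) h))) (at w)"
      using bounded_linear.has_derivative[OF bl_rot] by (simp add: o_def)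
    then show ?thesis unfolding pi1_def by (intro has_derivative_add pd)
  qed
  have G2: "((\<lambda>y. pi2 f (p y)) has_derivative
      (\<lambda>h. frechet_derivative p (at w) h - rot (transpose (hessian f (p w)) *v frechet_derivative p (at w) h))) (at w)"
    if w: "w \<in> W" for w
  proof -
    have pd: "(p has_derivative frechet_derivative p (at w)) (at w)" by (rule p_deriv[OF W_open p_smooth w])
    have gd: "(gradient2 f has_derivative (\<lambda>y. transpose (hessian f (p w)) *v y)) (at (p w))"
      by (rule grad_deriv[OF U_open f_smooth]) (use w p_into in auto)
    have "((gradient2 f \<circ> p) has_derivative ((\<lambda>y. transpose (hessian f (p w)) *v y) \<circ> frechet_derivative p (at w))) (at w)"
      by (rule diff_chain_at[OF pd gd])
    then have "((\<lambda>y. rot (gradient2 f (p y))) has_derivative (\<lambda>h. rot (transpose (hessian f (p w)) *v frechet_derivative p (at w) h))) (at w)"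
      using bounded_linear.has_derivative[OF bl_rot] by (simp add: o_def)
    then show ?thesis unfolding pi2_def by (intro has_derivative_diff pd)
  qed
  have part2: "pi1 f (p (vector [u1, v0])) = pi1 f (p (vector [u2, v0]))"
    if seg: "closed_segment (vector [u1, v0]) (vector [u2, v0]) \<subseteq> W" for u1 u2 v0 :: real
  proof (rule seg_const[where G="\<lambda>y. pi1 f (p y)"])
    fix w assume "w \<in> closed_segment (vector [u1, v0]) (vector [u2, v0]::real^2)"
    then have w: "w \<in> W" using seg by blast
    have ba: "vector [u2, v0] - vector [u1, v0] = (u2 - u1) *\<^sub>R (axis 1 1 :: real^2)"
      by (simp add: vec2_eq axis_def)
    have lin: "linear (frechet_derivative p (at w))"
      using p_deriv[OF W_open p_smooth w] has_derivative_linear by blast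
    have "frechet_derivative p (at w) (vector [u2, v0] - vector [u1, v0]) = (u2 - u1) *\<^sub>R vpartial 1 p w"
      unfolding ba vpartial_def using lin by (simp add: linear_scale)
    then show "\<exists>G'. ((\<lambda>y. pi1 f (p y)) has_derivative G') (at w) \<and> G' (vector [u2, v0] - vector [u1, v0]) = 0"
      using G1[OF w] pw[OF w]
      by (intro exI[of _ "(\<lambda>h. frechet_derivative p (at w) h + rot (transpose (hessian f (p w)) *v frechet_derivative p (at w) h))"])
        (simp add: matrix_vector_mult_scaleR linear_scale[OF linear_rot] rot_rot)
  qed
  have part3: "pi2 f (p (vector [u0, v1])) = pi2 f (p (vector [u0, v2]))"
    if seg: "closed_segment (vector [u0, v1]) (vector [u0, v2]) \<subseteq> W" for u0 v1 v2 :: real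
  proof (rule seg_const[where G="\<lambda>y. pi2 f (p y)"])
    fix w assume "w \<in> closed_segment (vector [u0, v1]) (vector [u0, v2]::real^2)"
    then have w: "w \<in> W" using seg by blast
    have ba: "vector [u0, v2] - vector [u0, v1] = (v2 - v1) *\<^sub>R (axis 2 1 :: real^2)"
      by (simp add: vec2_eq axis_def)
    have lin: "linear (frechet_derivative p (at w))"
      using p_deriv[OF W_open p_smooth w] has_derivative_linear by blast
    have "frechet_derivative p (at w) (vector [u0, v2] - vector [u0, v1]) = (v2 - v1) *\<^sub>R vpartial 2 p w"
      unfolding ba vpartial_def using lin by (simp add: linear_scale)
    then show "\<exists>G'. ((\<lambda>y. pi2 f (p y)) has_derivative G') (at w) \<and> G' (vector [u0, v2] - vector [u0, v1]) = 0"
      using G2[OF w] pw[OF w]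
      by (intro exI[of _ "(\<lambda>h. frechet_derivative p (at w) h - rot (transpose (hessian f (p w)) *v frechet_derivative p (at w) h))"])
        (simp add: matrix_vector_mult_scaleR linear_scale[OF linear_rot] linear_neg[OF linear_rot] rot_rot)
  qed
  show ?thesis using pw part2 part3 by blast
qed

end
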